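(* Fix constants $\alpha>0$, $\beta>0$ and $\gamma_P>2$. Let $f(n):=n^{2/3}\ln^{1/3}n$, $s:=\min\{\lceil\alpha f(n)\rceil,n-1\}$ and $g:=(\beta s\ln n)^{1/2}$, and suppose $s<n-1$. Let $c_{nk}$ be the number of comparisons made by the nonrecursive SELECT on an input list of size $n$ with rank $k$, and set $$\hat\gamma_P:=(4\gamma_P+2)(\beta/\alpha)^{1/2}+(2\gamma_P-1)\big[\alpha+1/f(n)\big].$$ Then $$\mathrm{P}\big[c_{nk}\le n+\min\{k,n-k\}+\hat\gamma_P f(n)\big]\ge1-4n^{-2\beta}.$$ The same holds with $f(n)$ in the definition of $\hat\gamma_P$ replaced by $f(3)$. Moreover, if $\beta\ge1/6$, then $$\mathrm{E}\,c_{nk}\le n+\min\{k,n-k\}+(\hat\gamma_P+4\gamma_P+2)f(n).$$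
   Context: Nonrecursive SELECT. The input is a list $X=(x_1,\dots,x_n)$ of elements of a totally ordered set (repeated values allowed) and an integer $1\le k\le n$. Let $\mathcal R$ be a deterministic routine that finds the $i$th smallest of any $m$ elements using at most $\gamma_P m$ comparisons. 1. Choose a set $I$ of $s$ positions uniformly at random among all $s$-subsets of $\{1,\dots,n\}$. The sample is $S=(x_j)_{j\in I}$ with sorted elements $y_1^*\le\dots\le y_s^*$. 2. Set $i_u:=\max\{\lceil ks/n-g\rceil,1\}$ and $i_v:=\min\{\lceil ks/n+g\rceil,s\}$. Compute $u:=y_{i_u}^*$ and $v:=y_{i_v}^*$ using $\mathcal R$ at most twice on at most $s$ elements, so this step uses at most $2\gamma_P s$ comparisons. 3. Partition. Each $x_j$ with $j\notin I$ is compared with the pivots. - If $k<n/2$: $x_j$ is compared with $v$ first, and with $u$ only if $x_j<v$ and $u<v$. - If $k\ge n/2$: $x_j$ is compared with $u$ first, and with $v$ only if $x_j>u$ and $u<v$. Sample elements are not compared. Hence this step uses $c$ comparisons, where $c=n-s$ if $u=v$, $c=(n-s)+|\{j\notin I:x_j<v\}|$ if $u<v$ and $k<n/2$, and $c=(n-s)+|\{j\notin I:x_j>u\}|$ if $u<v$ and $k\ge n/2$. 4. Let $L=\{x<u\}$, $U=\{x=u\}$, $M=\{u<x<v\}$ and $R=\{x>v\}$. - If $|L|<k\le|L\cup U|$, return $u$; if $|L\cup U\cup M|<k\le n-|R|$, return $v$. In either case set $\hat n:=0$. - Otherwise let $\hat X$ be $L$ if $k\le|L|$, else $R$ if $n-|R|<k$,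 else $M$. Let $\hat n:=|\hat X|$ and find the answer in $\hat X$ with $\mathcal R$, using at most $\gamma_P\hat n$ comparisons. The total count $c_{nk}$ consists of the comparisons in steps 2, 3 and 4, so $c_{nk}\le 2\gamma_P s+c+\gamma_P\hat n$. $\mathrm{P}$ and $\mathrm{E}$ are with respect to the random sample. *)

theory Defs
  imports "HOL-Probability.Probability"
begin

text \<open>Positions of the input list X are 0..<n (n = length X);
  ranks k are 1-based. The deterministic routine R is modelled by its comparison
  count costR xs i (comparisons used to find the i-th smallest of the list xs).\<close>

definition fS :: "nat \<Rightarrow> real" where
  "fS n = real n powr (2/3) * ln (real n) powr (1/3)"

definition sampsz :: "real \<Rightarrow> nat \<Rightarrow> nat" where
  "sampsz \<alpha> n = min (nat \<lceil>\<alpha> * fS n\<rceil>) (n - 1)"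

definition gapS :: "real \<Rightarrow> real \<Rightarrow> nat \<Rightarrow> real" where
  "gapS \<alpha> \<beta> n = sqrt (\<beta> * real (sampsz \<alpha> n) * ln (real n))"

definition idx_u :: "real \<Rightarrow> real \<Rightarrow> nat \<Rightarrow> nat \<Rightarrow> nat" where
  "idx_u \<alpha> \<beta> n k =
     max (nat \<lceil>real k * real (sampsz \<alpha> n) / real n - gapS \<alpha> \<beta> n\<rceil>) 1"

definition idx_v :: "real \<Rightarrow> real \<Rightarrow> nat \<Rightarrow> nat \<Rightarrow> nat" where
  "idx_v \<alpha> \<beta> n k =
     min (nat \<lceil>real k * real (sampsz \<alpha> n) / real n + gapS \<alpha> \<beta> n\<rceil>) (sampsz \<alpha> n)"

definition samples :: "nat \<Rightarrow> nat \<Rightarrow> nat set set" where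
  "samples n s = {I. I \<subseteq> {0..<n} \<and> card I = s}"

definition sample_list :: "'a list \<Rightarrow> nat set \<Rightarrow> 'a list" where
  "sample_list X I = map (\<lambda>j. X ! j) (sorted_list_of_set I)"

definition pivot_u :: "real \<Rightarrow> real \<Rightarrow> 'a::linorder list \<Rightarrow> nat \<Rightarrow> nat set \<Rightarrow> 'a" where
  "pivot_u \<alpha> \<beta> X k I = sort (sample_list X I) ! (idx_u \<alpha> \<beta> (length X) k - 1)"

definition pivot_v :: "real \<Rightarrow> real \<Rightarrow> 'a::linorder list \<Rightarrow> nat \<Rightarrow> nat set \<Rightarrow> 'a" where
  "pivot_v \<alpha> \<beta> X k I = sort (sample_list X I) ! (idx_v \<alpha> \<beta> (length X) k - 1)"

definition part_cost :: "'a::linorder list \<Rightarrow> nat \<Rightarrow> nat set \<Rightarrow> 'a \<Rightarrow> 'a \<Rightarrow> nat" where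
  "part_cost X k I u v =
     (length X - card I) +
     (if u = v then 0
      else if real k < real (length X) / 2
        then card {j \<in> {0..<length X} - I. X ! j < v}
        else card {j \<in> {0..<length X} - I. u < X ! j})"

text \<open>Step 4: comparisons of the final call of R (0 if a pivot is returned).\<close>
definition final_cost :: "('a list \<Rightarrow> nat \<Rightarrow> nat) \<Rightarrow> 'a::linorder list \<Rightarrow> nat \<Rightarrow> 'a \<Rightarrow> 'a \<Rightarrow> nat" where
  "final_cost costR X k u v =
     (let n = length X;
          nL = card {j \<in> {0..<n}. X ! j < u};
          nU = card {j \<in> {0..<n}. X ! j = u};
          nM = card {j \<in> {0..<n}. u < X ! j \<and> X ! j < v};
          nR = card {j \<in> {0..<n}. v < X ! j}
      in if nL < k \<and> k \<le> nL + nU then 0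
         else if nL + nU + nM < k \<and> k \<le> n - nR then 0
         else if k \<le> nL then costR (filter (\<lambda>x. x < u) X) k
         else if n - nR < k then costR (filter (\<lambda>x. v < x) X) (k - (n - nR))
         else costR (filter (\<lambda>x. u < x \<and> x < v) X) (k - (nL + nU)))"

text \<open>Total number of comparisons c_nk for sample positions I (steps 2, 3, 4).\<close>
definition select_cost ::
  "('a list \<Rightarrow> nat \<Rightarrow> nat) \<Rightarrow> real \<Rightarrow> real \<Rightarrow> 'a::linorder list \<Rightarrow> nat \<Rightarrow> nat set \<Rightarrow> nat" where
  "select_cost costR \<alpha> \<beta> X k I =
     (let S = sample_list X I;
          u = pivot_u \<alpha> \<beta> X k I;
          v = pivot_v \<alpha> \<beta> X k I
      in costR S (idx_u \<alpha> \<beta> (length X) k) + costR S (idx_v \<alpha> \<beta> (length X) k)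
         + part_cost X k I u v + final_cost costR X k u v)"

definition gamma_hat :: "real \<Rightarrow> real \<Rightarrow> real \<Rightarrow> real \<Rightarrow> real" where
  "gamma_hat \<alpha> \<beta> \<gamma>P F = (4 * \<gamma>P + 2) * sqrt (\<beta> / \<alpha>) + (2 * \<gamma>P - 1) * (\<alpha> + 1 / F)"

end

theory Submission
  imports Defs
begin

lemma two_point_aux:
  fixes p h :: real
  assumes "0 \<le> p" "p \<le> 1" "0 \<le> h"
  shows "p * exp (h * (1 - p)) + (1 - p) * exp (- (h * p)) \<le> exp (h\<^sup>2 / 8)"
proof -
  have pos: "1 + p * (exp h - 1) > 0"
    using assms by (intro add_pos_nonneg mult_nonneg_nonneg) auto
  have "p * exp (h * (1 - p)) + (1 - p) * exp (- (h * p))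
        = exp (- (h * p)) * (1 + p * (exp h - 1))"
    by (simp add: algebra_simps exp_diff exp_minus field_simps flip: exp_add)
  also have "\<dots> = exp (-h * p + ln (1 + p * (exp h - 1)))"
    using pos by (simp add: exp_diff exp_minus field_simps)
  also have "\<dots> \<le> exp (h\<^sup>2 / 8)"
    using Hoeffdings_lemma_aux[of h p] assms by simp
  finally show ?thesis .
qed

lemma two_point:
  fixes p h :: real
  assumes "0 \<le> p" "p \<le> 1"
  shows "p * exp (h * (1 - p)) + (1 - p) * exp (- (h * p)) \<le> exp (h\<^sup>2 / 8)"
proof (cases "h \<ge> 0")
  case True thus ?thesis using two_point_aux assms by blast
next
  case False
  have "(1 - p) * exp ((-h) * (1 - (1 - p))) + (1 - (1 - p)) * exp (- ((-h) * (1 - p))) \<le> exp ((-h)\<^sup>2 / 8)"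
    using False assms by (intro two_point_aux) auto
  thus ?thesis by (simp add: algebra_simps)
qed

lemma sum_subsets_Suc:
  fixes F :: "'b set \<Rightarrow> real"
  assumes U: "finite U"
  shows "(\<Sum>I\<in>{I. I \<subseteq> U \<and> card I = Suc s}. real (Suc s) * F I)
       = (\<Sum>x\<in>U. \<Sum>J\<in>{J. J \<subseteq> U - {x} \<and> card J = s}. F (insert x J))"
proof -
  let ?Sub = "{I. I \<subseteq> U \<and> card I = Suc s}"
  have finS: "finite ?Sub" using U by (auto intro: finite_subset[of _ "Pow U"])
  have "(\<Sum>I\<in>?Sub. real (Suc s) * F I) = (\<Sum>I\<in>?Sub. \<Sum>x\<in>{x. x \<in> U \<and> x \<in> I}. F I)"
  proof (rule sum.cong[OF refl])
    fix I assume "I \<in> ?Sub"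
    hence "{x. x \<in> U \<and> x \<in> I} = I" "card I = Suc s" by auto
    thus "real (Suc s) * F I = (\<Sum>x\<in>{x. x \<in> U \<and> x \<in> I}. F I)" by simp
  qed
  also have "\<dots> = (\<Sum>x\<in>U. \<Sum>I\<in>{I. I \<in> ?Sub \<and> x \<in> I}. F I)"
    by (rule sum.swap_restrict[OF finS U])
  also have "\<dots> = (\<Sum>x\<in>U. \<Sum>J\<in>{J. J \<subseteq> U - {x} \<and> card J = s}. F (insert x J))"
  proof (rule sum.cong[OF refl])
    fix x assume x: "x \<in> U"
    have bij: "bij_betw (insert x) {J. J \<subseteq> U - {x} \<and> card J = s} {I. I \<in> ?Sub \<and> x \<in> I}"
    proof (rule bij_betw_byWitness[where f' = "\<lambda>I. I - {x}"])
      show "\<forall>a\<in>{J. J \<subseteq> U - {x} \<and> card J = s}. insert x a - {x} = a" by auto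
      show "\<forall>a'\<in>{I. I \<in> ?Sub \<and> x \<in> I}. insert x (a' - {x}) = a'" by auto
      show "insert x ` {J. J \<subseteq> U - {x} \<and> card J = s} \<subseteq> {I. I \<in> ?Sub \<and> x \<in> I}"
      proof
        fix I assume "I \<in> insert x ` {J. J \<subseteq> U - {x} \<and> card J = s}"
        then obtain J where J: "J \<subseteq> U - {x}" "card J = s" "I = insert x J" by auto
        have "finite J" using J U finite_subset by blast
        moreover have "x \<notin> J" using J by auto
        ultimately show "I \<in> {I. I \<in> ?Sub \<and> x \<in> I}" using J x by auto
      qed
      show "(\<lambda>I. I - {x}) ` {I. I \<in> ?Sub \<and> x \<in> I} \<subseteq> {J. J \<subseteq> U - {x} \<and> card J = s}"
      proof
        fix J assume "J \<in> (\<lambda>I. I - {x}) ` {I. I \<in> ?Sub \<and> x \<in> I}"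
        then obtain I where I: "I \<subseteq> U" "card I = Suc s" "x \<in> I" "J = I - {x}" by auto
        have "finite I" using I U finite_subset by blast
        thus "J \<in> {J. J \<subseteq> U - {x} \<and> card J = s}" using I by auto
      qed
    qed
    show "(\<Sum>I\<in>{I. I \<in> ?Sub \<and> x \<in> I}. F I) = (\<Sum>J\<in>{J. J \<subseteq> U - {x} \<and> card J = s}. F (insert x J))"
      using sum.reindex_bij_betw[OF bij, of F] by simp
  qed
  finally show ?thesis .
qed

lemma key_ineq:
  fixes N m s l :: real
  assumes N: "N \<ge> 2" and m: "0 \<le> m" "m \<le> N" and s: "0 \<le> s" "s \<le> N - 1"
  shows "m * exp (l + l * s * (m - 1) / (N - 1)) + (N - m) * exp (l * s * m / (N - 1))
         \<le> N * exp (l * (s + 1) * m / N + l\<^sup>2 / 8)"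
proof -
  define p where "p = m / N"
  define d where "d = 1 - s / (N - 1)"
  define \<mu> where "\<mu> = (s + 1) * m / N"
  have p01: "0 \<le> p" "p \<le> 1" using N m by (auto simp: p_def)
  have d01: "0 \<le> d" "d \<le> 1" using N s by (auto simp: d_def field_simps)
  have e1: "l + l * s * (m - 1) / (N - 1) = l * \<mu> + (l * d) * (1 - p)"
    using N by (simp add: \<mu>_def d_def p_def field_simps)
  have e0: "l * s * m / (N - 1) = l * \<mu> + (- ((l * d) * p))"
    using N by (simp add: \<mu>_def d_def p_def field_simps)
  have "m * exp (l + l * s * (m - 1) / (N - 1)) + (N - m) * exp (l * s * m / (N - 1))
      = N * exp (l * \<mu>) * (p * exp ((l * d) * (1 - p)) + (1 - p) * exp (- ((l * d) * p)))"
    unfolding e1 e0 exp_add using N by (simp add: p_def field_simps)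
  also have "\<dots> \<le> N * exp (l * \<mu>) * exp ((l * d)\<^sup>2 / 8)"
    using two_point[OF p01] N by (intro mult_left_mono) auto
  also have "\<dots> \<le> N * exp (l * \<mu>) * exp (l\<^sup>2 / 8)"
  proof -
    have "(l * d)\<^sup>2 = l\<^sup>2 * d\<^sup>2" by (simp add: power_mult_distrib)
    also have "\<dots> \<le> l\<^sup>2 * 1" using d01 by (intro mult_left_mono) (auto simp: power_le_one)
    finally show ?thesis using N by (intro mult_left_mono) auto
  qed
  also have "\<dots> = N * exp (l * (s + 1) * m / N + l\<^sup>2 / 8)"
    by (simp add: \<mu>_def exp_add)
  finally show ?thesis .
qed

lemma mgf_subsets:
  fixes A U :: "'b set" and l :: real
  assumes "finite U" "s \<le> card U"
  shows "(\<Sum>I\<in>{I. I \<subseteq> U \<and> card I = s}. exp (l * real (card (I \<inter> A))))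
     \<le> real (card U choose s) * exp (l * real s * real (card (U \<inter> A)) / real (card U) + l\<^sup>2 * real s / 8)"
  using assms
proof (induction s arbitrary: U)
  case 0
  have "{I. I \<subseteq> U \<and> card I = 0} = {{}}"
    using 0 by (auto dest: finite_subset)
  thus ?case by simp
next
  case (Suc s U)
  note U = Suc.prems(1)
  define N where "N = card U"
  define m where "m = card (U \<inter> A)"
  have N1: "N \<ge> Suc s" using Suc.prems N_def by simp
  have mN: "m \<le> N" unfolding m_def N_def using U by (intro card_mono) auto
  define e where "e = (\<lambda>x. if x \<in> A then (1::nat) else 0)"
  define f where "f = (\<lambda>x. exp (l * real (e x) + l * real s * real (m - e x) / real (N - 1)))"
  have inner: "(\<Sum>J\<in>{J. J \<subseteq> U - {x} \<and> card J = s}. exp (l * real (card (insert x J \<inter> A))))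
      \<le> real (N - 1 choose s) * exp (l\<^sup>2 * real s / 8) * f x" if x: "x \<in> U" for x
  proof -
    have cardU': "card (U - {x}) = N - 1" using x U N_def by simp
    have m': "card ((U - {x}) \<inter> A) = m - e x"
    proof -
      have "(U - {x}) \<inter> A = (U \<inter> A) - {x}" by auto
      thus ?thesis using x U by (simp add: m_def e_def)
    qed
    have "(\<Sum>J\<in>{J. J \<subseteq> U - {x} \<and> card J = s}. exp (l * real (card (insert x J \<inter> A))))
        = (\<Sum>J\<in>{J. J \<subseteq> U - {x} \<and> card J = s}. exp (l * real (e x)) * exp (l * real (card (J \<inter> A))))"
    proof (rule sum.cong[OF refl])
      fix J assume J: "J \<in> {J. J \<subseteq> U - {x} \<and> card J = s}"
      have fJ: "finite J" using J U finite_subset by auto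
      have xJ: "x \<notin> J" using J by auto
      have "card (insert x J \<inter> A) = e x + card (J \<inter> A)"
        using fJ xJ by (auto simp: e_def Int_insert_left)
      thus "exp (l * real (card (insert x J \<inter> A))) = exp (l * real (e x)) * exp (l * real (card (J \<inter> A)))"
        by (simp add: distrib_left exp_add)
    qed
    also have "\<dots> = exp (l * real (e x)) * (\<Sum>J\<in>{J. J \<subseteq> U - {x} \<and> card J = s}. exp (l * real (card (J \<inter> A))))"
      by (simp add: sum_distrib_left)
    also have "\<dots> \<le> exp (l * real (e x)) * (real (card (U - {x}) choose s) *
          exp (l * real s * real (card ((U - {x}) \<inter> A)) / real (card (U - {x})) + l\<^sup>2 * real s / 8))"
      using Suc.IH[of "U - {x}"] U N1 cardU' by (intro mult_left_mono) auto
    also have "\<dots> = real (N - 1 choose s) * exp (l\<^sup>2 * real s / 8) * f x"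
      unfolding cardU' m' f_def by (simp add: exp_add)
    finally show ?thesis .
  qed
  have sumb: "(\<Sum>x\<in>U. f x) \<le> real N * exp (l * real (Suc s) * real m / real N + l\<^sup>2 / 8)"
  proof -
    have split: "(\<Sum>x\<in>U. f x) = (\<Sum>x\<in>U \<inter> A. f x) + (\<Sum>x\<in>U - A. f x)"
      using U by (metis Diff_Int2 Diff_eq Int_Diff_Un Int_commute sum.Int_Diff)
    have cUA: "card (U - A) = N - m"
      using U by (simp add: N_def m_def card_Diff_subset_Int Diff_Int2 flip: Diff_Int2)
    have "(\<Sum>x\<in>U \<inter> A. f x) = real m * exp (l + l * real s * (real m - 1) / (real N - 1))"
    proof -
      have "(\<Sum>x\<in>U \<inter> A. f x) = (\<Sum>x\<in>U \<inter> A. exp (l + l * real s * (real m - 1) / (real N - 1)))"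
      proof (rule sum.cong[OF refl])
        fix x assume x: "x \<in> U \<inter> A"
        have "m \<ge> 1" using x U unfolding m_def by (metis One_nat_def Suc_leI card_gt_0_iff empty_iff finite_Int)
        moreover have "N \<ge> 1" using N1 by simp
        ultimately show "f x = exp (l + l * real s * (real m - 1) / (real N - 1))"
          using x by (simp add: f_def e_def of_nat_diff)
      qed
      thus ?thesis by (simp add: m_def)
    qed
    moreover have "(\<Sum>x\<in>U - A. f x) = real (N - m) * exp (l * real s * real m / (real N - 1))"
    proof -
      have "(\<Sum>x\<in>U - A. f x) = (\<Sum>x\<in>U - A. exp (l * real s * real m / (real N - 1)))"
      proof (rule sum.cong[OF refl])
        fix x assume x: "x \<in> U - A"
        have "N \<ge> 1" using N1 by simp
        thus "f x = exp (l * real s * real m / (real N - 1))"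
          using x by (simp add: f_def e_def of_nat_diff)
      qed
      thus ?thesis using cUA by simp
    qed
    ultimately have sumf: "(\<Sum>x\<in>U. f x) = real m * exp (l + l * real s * (real m - 1) / (real N - 1))
        + (real N - real m) * exp (l * real s * real m / (real N - 1))"
      using split mN by (simp add: of_nat_diff)
    show ?thesis
    proof (cases "N = 1")
      case True
      hence s0: "s = 0" using N1 by simp
      have "m = 0 \<or> m = 1" using mN True by auto
      thus ?thesis unfolding sumf using True s0 by auto
    next
      case False
      hence "real N \<ge> 2" using N1 by simp
      from key_ineq[OF this, of "real m" "real s" l] show ?thesis
        unfolding sumf using mN N1 False by (simp add: of_nat_diff algebra_simps)
    qed
  qed
  have "real (Suc s) * (\<Sum>I\<in>{I. I \<subseteq> U \<and> card I = Suc s}. exp (l * real (card (I \<inter> A))))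
      = (\<Sum>x\<in>U. \<Sum>J\<in>{J. J \<subseteq> U - {x} \<and> card J = s}. exp (l * real (card (insert x J \<inter> A))))"
    using sum_subsets_Suc[OF U, of s "\<lambda>I. exp (l * real (card (I \<inter> A)))"]
    by (simp add: sum_distrib_left)
  also have "\<dots> \<le> (\<Sum>x\<in>U. real (N - 1 choose s) * exp (l\<^sup>2 * real s / 8) * f x)"
    by (rule sum_mono) (rule inner)
  also have "\<dots> = real (N - 1 choose s) * exp (l\<^sup>2 * real s / 8) * (\<Sum>x\<in>U. f x)"
    by (simp add: sum_distrib_left)
  also have "\<dots> \<le> real (N - 1 choose s) * exp (l\<^sup>2 * real s / 8) * (real N * exp (l * real (Suc s) * real m / real N + l\<^sup>2 / 8))"
    using sumb by (intro mult_left_mono) auto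
  also have "\<dots> = real (Suc s) * (real (N choose Suc s) * exp (l * real (Suc s) * real m / real N + l\<^sup>2 * real (Suc s) / 8))"
  proof -
    obtain N' where N': "N = Suc N'" using N1 by (cases N) auto
    have "real (Suc s) * real (N choose Suc s) = real N * real (N - 1 choose s)"
      using Suc_times_binomial[of s N'] N' by (metis of_nat_mult diff_Suc_1)
    hence "real (Suc s) * (real (N choose Suc s) * exp (l * real (Suc s) * real m / real N + l\<^sup>2 * real (Suc s) / 8))
       = real N * real (N - 1 choose s) * exp (l * real (Suc s) * real m / real N + l\<^sup>2 * real (Suc s) / 8)"
      by (simp add: mult.assoc[symmetric])
    also have "\<dots> = real (N - 1 choose s) * exp (l\<^sup>2 * real s / 8) * (real N * exp (l * real (Suc s) * real m / real N + l\<^sup>2 / 8))"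
      by (simp add: exp_add[symmetric] algebra_simps add_divide_distrib)
    finally show ?thesis by simp
  qed
  finally show ?case unfolding N_def m_def by (simp add: mult_le_cancel_left)
qed

lemma tail_gen:
  fixes A U :: "'b set" and l c :: real
  assumes U: "finite U" "s \<le> card U"
    and P: "\<And>I. I \<in> {I. I \<subseteq> U \<and> card I = s} \<Longrightarrow> P I \<Longrightarrow> c \<le> l * real (card (I \<inter> A))"
  shows "real (card {I \<in> {I. I \<subseteq> U \<and> card I = s}. P I})
     \<le> real (card U choose s) * exp (l * real s * real (card (U \<inter> A)) / real (card U) + l\<^sup>2 * real s / 8 - c)"
proof -
  let ?Sub = "{I. I \<subseteq> U \<and> card I = s}"
  have finS: "finite ?Sub" using U by (auto intro: finite_subset[of _ "Pow U"])
  have "real (card {I \<in> ?Sub. P I}) = (\<Sum>I\<in>{I \<in> ?Sub. P I}. 1)" by simp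
  also have "\<dots> \<le> (\<Sum>I\<in>{I \<in> ?Sub. P I}. exp (l * real (card (I \<inter> A)) - c))"
    using P by (intro sum_mono) auto
  also have "\<dots> \<le> (\<Sum>I\<in>?Sub. exp (l * real (card (I \<inter> A)) - c))"
    using finS by (intro sum_mono2) auto
  also have "\<dots> = exp (- c) * (\<Sum>I\<in>?Sub. exp (l * real (card (I \<inter> A))))"
    by (simp add: sum_distrib_left exp_diff exp_minus field_simps)
  also have "\<dots> \<le> exp (- c) * (real (card U choose s) * exp (l * real s * real (card (U \<inter> A)) / real (card U) + l\<^sup>2 * real s / 8))"
    using mgf_subsets[OF U, of l A] by (intro mult_left_mono) auto
  also have "\<dots> = real (card U choose s) * exp (l * real s * real (card (U \<inter> A)) / real (card U) + l\<^sup>2 * real s / 8 - c)"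
    by (simp only: exp_diff exp_minus divide_inverse mult_ac)
  finally show ?thesis .
qed

lemma tail_upper:
  fixes A U :: "'b set" and t :: real
  assumes U: "finite U" "s \<le> card U" and s: "s > 0" and t: "t \<ge> 0"
  shows "real (card {I \<in> {I. I \<subseteq> U \<and> card I = s}.
            real s * real (card (U \<inter> A)) / real (card U) + t \<le> real (card (I \<inter> A))})
     \<le> real (card U choose s) * exp (-2 * t\<^sup>2 / real s)"
proof -
  define \<mu> where "\<mu> = real s * real (card (U \<inter> A)) / real (card U)"
  define l where "l = 4 * t / real s"
  have "real (card {I \<in> {I. I \<subseteq> U \<and> card I = s}. \<mu> + t \<le> real (card (I \<inter> A))})
     \<le> real (card U choose s) * exp (l * real s * real (card (U \<inter> A)) / real (card U) + l\<^sup>2 * real s / 8 - l * (\<mu> + t))"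
    using t s by (intro tail_gen[OF U]) (auto simp: l_def intro!: mult_left_mono divide_right_mono)
  also have "l * real s * real (card (U \<inter> A)) / real (card U) + l\<^sup>2 * real s / 8 - l * (\<mu> + t) = -2 * t\<^sup>2 / real s"
    using s by (simp add: l_def \<mu>_def field_simps power2_eq_square)
  finally show ?thesis by (simp add: \<mu>_def)
qed

lemma tail_lower:
  fixes A U :: "'b set" and t :: real
  assumes U: "finite U" "s \<le> card U" and s: "s > 0" and t: "t \<ge> 0"
  shows "real (card {I \<in> {I. I \<subseteq> U \<and> card I = s}.
            real (card (I \<inter> A)) \<le> real s * real (card (U \<inter> A)) / real (card U) - t})
     \<le> real (card U choose s) * exp (-2 * t\<^sup>2 / real s)"
proof -
  define \<mu> where "\<mu> = real s * real (card (U \<inter> A)) / real (card U)"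
  define l where "l = - (4 * t / real s)"
  have "real (card {I \<in> {I. I \<subseteq> U \<and> card I = s}. real (card (I \<inter> A)) \<le> \<mu> - t})
     \<le> real (card U choose s) * exp (l * real s * real (card (U \<inter> A)) / real (card U) + l\<^sup>2 * real s / 8 - l * (\<mu> - t))"
    using t s by (intro tail_gen[OF U]) (auto simp: l_def intro!: mult_left_mono divide_right_mono)
  also have "l * real s * real (card (U \<inter> A)) / real (card U) + l\<^sup>2 * real s / 8 - l * (\<mu> - t) = -2 * t\<^sup>2 / real s"
    using s by (simp add: l_def \<mu>_def field_simps power2_eq_square)
  finally show ?thesis by (simp add: \<mu>_def)
qed

lemma sort_counts:
  fixes S :: "'a::linorder list"
  assumes i: "1 \<le> i" "i \<le> length S"
  shows "length (filter (\<lambda>x. x < sort S ! (i-1)) S) \<le> i - 1"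
    and "length (filter (\<lambda>x. sort S ! (i-1) < x) S) \<le> length S - i"
proof -
  let ?ys = "sort S"
  have srt: "sorted ?ys" by simp
  have len: "length ?ys = length S" by simp
  have eq: "length (filter P S) = length (filter P ?ys)" for P
    by (metis mset_filter mset_sort size_mset)
  have "{j. j < length ?ys \<and> ?ys ! j < ?ys ! (i-1)} \<subseteq> {..<i-1}"
  proof
    fix j assume j: "j \<in> {j. j < length ?ys \<and> ?ys ! j < ?ys ! (i-1)}"
    show "j \<in> {..<i-1}"
    proof (rule ccontr)
      assume "j \<notin> {..<i-1}"
      hence "?ys ! (i-1) \<le> ?ys ! j" using j srt by (intro sorted_nth_mono) auto
      thus False using j by auto
    qed
  qed
  hence "card {j. j < length ?ys \<and> ?ys ! j < ?ys ! (i-1)} \<le> i - 1"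
    by (metis card_lessThan card_mono finite_lessThan)
  thus "length (filter (\<lambda>x. x < sort S ! (i-1)) S) \<le> i - 1"
    unfolding eq[of "\<lambda>x. x < sort S ! (i-1)"] length_filter_conv_card[of _ ?ys] .
  have "{j. j < length ?ys \<and> ?ys ! (i-1) < ?ys ! j} \<subseteq> {i..<length S}"
  proof
    fix j assume j: "j \<in> {j. j < length ?ys \<and> ?ys ! (i-1) < ?ys ! j}"
    show "j \<in> {i..<length S}"
    proof (rule ccontr)
      assume "j \<notin> {i..<length S}"
      hence "j \<le> i - 1" using j i by auto
      hence "?ys ! j \<le> ?ys ! (i-1)" using j i srt by (intro sorted_nth_mono) auto
      thus False using j by auto
    qed
  qed
  hence "card {j. j < length ?ys \<and> ?ys ! (i-1) < ?ys ! j} \<le> length S - i"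
    by (metis card_atLeastLessThan card_mono finite_atLeastLessThan)
  thus "length (filter (\<lambda>x. sort S ! (i-1) < x) S) \<le> length S - i"
    unfolding eq[of "\<lambda>x. sort S ! (i-1) < x"] length_filter_conv_card[of _ ?ys] .
qed

lemma sample_count:
  assumes "finite I"
  shows "length (filter P (sample_list X I)) = card {j \<in> I. P (X ! j)}"
proof -
  have "length (filter P (sample_list X I)) = length (filter (\<lambda>j. P (X ! j)) (sorted_list_of_set I))"
    by (simp add: sample_list_def filter_map comp_def)
  also have "\<dots> = card ({j. P (X ! j)} \<inter> set (sorted_list_of_set I))"
    by (rule distinct_length_filter) simp
  also have "\<dots> = card {j \<in> I. P (X ! j)}" using assms by (simp add: Collect_conj_eq Int_commute)
  finally show ?thesis .
qed

lemma X_count: "length (filter P X) = card {j \<in> {0..<length X}. P (X ! j)}"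
  by (simp add: length_filter_conv_card)

lemma exists_R:
  fixes X :: "'a::linorder list"
  shows "\<exists>R. \<forall>m \<le> length X. R m \<subseteq> {0..<length X} \<and> card (R m) = m \<and>
            (\<forall>j\<in>R m. \<forall>j'\<in>{0..<length X} - R m. X ! j \<le> X ! j')"
proof -
  define n where "n = length X"
  define P where "P = sort_key (\<lambda>j. X ! j) [0..<n]"
  have setP: "set P = {0..<n}" by (simp add: P_def)
  have distP: "distinct P" by (simp add: P_def)
  have lenP: "length P = n" by (simp add: P_def)
  have srt: "sorted (map (\<lambda>j. X ! j) P)" unfolding P_def by (rule sorted_sort_key)
  have "\<forall>m \<le> n. set (take m P) \<subseteq> {0..<n} \<and> card (set (take m P)) = m \<and>
            (\<forall>j\<in>set (take m P). \<forall>j'\<in>{0..<n} - set (take m P). X ! j \<le> X ! j')"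
  proof (intro allI impI conjI ballI)
    fix m assume m: "m \<le> n"
    show "set (take m P) \<subseteq> {0..<n}" using set_take_subset[of m P] unfolding setP .
    have "distinct (take m P)" using distP by (rule distinct_take)
    hence "card (set (take m P)) = length (take m P)" by (rule distinct_card)
    thus "card (set (take m P)) = m" using m lenP by simp
    fix j j' assume j: "j \<in> set (take m P)" and j': "j' \<in> {0..<n} - set (take m P)"
    obtain a where a0: "a < length (take m P)" "take m P ! a = j" using j by (metis in_set_conv_nth)
    have a: "a < m" "j = P ! a" using a0 m lenP by auto
    have "j' \<in> set P" using j' setP by blast
    then obtain b where b0: "b < length P" "P ! b = j'" by (metis in_set_conv_nth)
    have b: "b < n" "j' = P ! b" using b0 lenP by auto
    have "\<not> b < m"
    proof
      assume bm: "b < m"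
      hence "take m P ! b = j'" using b by simp
      moreover have "b < length (take m P)" using bm b lenP by simp
      ultimately have "j' \<in> set (take m P)" by (metis nth_mem)
      thus False using j' by blast
    qed
    hence "a \<le> b" using a by simp
    hence "map (\<lambda>j. X ! j) P ! a \<le> map (\<lambda>j. X ! j) P ! b"
      using srt b lenP by (intro sorted_nth_mono) auto
    thus "X ! j \<le> X ! j'" using a b lenP m by simp
  qed
  note * = this
  show ?thesis unfolding n_def[symmetric]
    by (rule exI[of _ "\<lambda>m. set (take m P)"]) (rule *)
qed

lemma lowerA:
  fixes X :: "'a::linorder list"
  assumes R: "R \<subseteq> {0..<n}" "card R = m"
    and low: "\<forall>j\<in>R. \<forall>j'\<in>{0..<n} - R. X ! j \<le> X ! j'"
    and I: "I \<subseteq> {0..<n}" and cnt: "card {j\<in>I. X ! j < w} \<le> i - 1" and i: "1 \<le> i"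
    and H: "i \<le> card (I \<inter> R)"
  shows "card {j\<in>{0..<n}. X ! j < w} < m"
proof -
  have finI: "finite I" using I finite_subset by blast
  have key: False if sub: "I \<inter> R \<subseteq> {j\<in>I. X ! j < w}"
  proof -
    have "card (I \<inter> R) \<le> card {j\<in>I. X ! j < w}" using sub finI by (intro card_mono) auto
    thus False using cnt H i by linarith
  qed
  have sub: "{j\<in>{0..<n}. X ! j < w} \<subseteq> R"
  proof
    fix j assume j: "j \<in> {j\<in>{0..<n}. X ! j < w}"
    show "j \<in> R"
    proof (rule ccontr)
      assume "j \<notin> R"
      hence "\<forall>j'\<in>I \<inter> R. X ! j' \<le> X ! j" using low j by auto
      hence "I \<inter> R \<subseteq> {j\<in>I. X ! j < w}" using j by (auto dest: order.strict_trans1)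
      thus False by (rule key)
    qed
  qed
  have "{j\<in>{0..<n}. X ! j < w} \<noteq> R"
  proof
    assume "{j\<in>{0..<n}. X ! j < w} = R"
    hence "I \<inter> R \<subseteq> {j\<in>I. X ! j < w}" by auto
    thus False by (rule key)
  qed
  hence "card {j\<in>{0..<n}. X ! j < w} < card R"
    using sub R by (intro psubset_card_mono) (auto intro: finite_subset)
  thus ?thesis using R by simp
qed

lemma upperB:
  fixes X :: "'a::linorder list"
  assumes R: "R \<subseteq> {0..<n}" "card R = m"
    and low: "\<forall>j\<in>R. \<forall>j'\<in>{0..<n} - R. X ! j \<le> X ! j'"
    and I: "I \<subseteq> {0..<n}" "card I = s" and cnt: "card {j\<in>I. w < X ! j} \<le> s - i" and i: "1 \<le> i" "i \<le> s"
    and H: "card (I \<inter> R) < i"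
  shows "card {j\<in>{0..<n}. w < X ! j} + m < n"
proof -
  have finI: "finite I" using I finite_subset by blast
  have cIR: "card (I - R) = s - card (I \<inter> R)" using I finI by (simp add: card_Diff_subset_Int Diff_Int2 flip: Diff_Int2)
  have key: False if sub: "I - R \<subseteq> {j\<in>I. w < X ! j}"
  proof -
    have "card (I - R) \<le> card {j\<in>I. w < X ! j}" using sub finI by (intro card_mono) auto
    moreover have "card (I \<inter> R) \<le> s" using I finI by (metis card_mono inf_le1)
    ultimately show False using cnt H i cIR by linarith
  qed
  have sub: "{j\<in>{0..<n}. w < X ! j} \<subseteq> {0..<n} - R"
  proof
    fix j assume j: "j \<in> {j\<in>{0..<n}. w < X ! j}"
    show "j \<in> {0..<n} - R"
    proof (rule ccontr)
      assume "j \<notin> {0..<n} - R"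
      hence "j \<in> R" using j by auto
      hence "\<forall>j'\<in>I - R. X ! j \<le> X ! j'" using low I by auto
      hence "I - R \<subseteq> {j\<in>I. w < X ! j}" using j by (auto dest: order.strict_trans2)
      thus False by (rule key)
    qed
  qed
  have "{j\<in>{0..<n}. w < X ! j} \<noteq> {0..<n} - R"
  proof
    assume "{j\<in>{0..<n}. w < X ! j} = {0..<n} - R"
    hence "I - R \<subseteq> {j\<in>I. w < X ! j}" using I by auto
    thus False by (rule key)
  qed
  hence "card {j\<in>{0..<n}. w < X ! j} < card ({0..<n} - R)"
    using sub by (intro psubset_card_mono) auto
  also have "card ({0..<n} - R) = n - m" using R by (simp add: card_Diff_subset finite_subset)
  finally show ?thesis using R
    by (metis add.commute card_mono finite_atLeastLessThan card_atLeastLessThan diff_zero less_diff_conv)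
qed

lemma final_bound:
  fixes X :: "'a::linorder list" and B \<gamma>P :: real
  assumes cR: "\<And>xs i. 1 \<le> i \<Longrightarrow> i \<le> length xs \<Longrightarrow> real (costR xs i) \<le> \<gamma>P * real (length xs)"
    and k: "1 \<le> k" "k \<le> length X" and \<gamma>: "\<gamma>P \<ge> 0"
    and BL: "k \<le> card {j\<in>{0..<length X}. X ! j < u} \<Longrightarrow> real (card {j\<in>{0..<length X}. X ! j < u}) \<le> B"
    and BR: "length X - card {j\<in>{0..<length X}. v < X ! j} < k \<Longrightarrow> real (card {j\<in>{0..<length X}. v < X ! j}) \<le> B"
    and BM: "real (card {j\<in>{0..<length X}. u < X ! j \<and> X ! j < v}) \<le> B" and B0: "B \<ge> 0"
  shows "real (final_cost costR X k u v) \<le> \<gamma>P * B"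
proof -
  define n where "n = length X"
  define nL where "nL = card {j\<in>{0..<n}. X ! j < u}"
  define nU where "nU = card {j\<in>{0..<n}. X ! j = u}"
  define nM where "nM = card {j\<in>{0..<n}. u < X ! j \<and> X ! j < v}"
  define nR where "nR = card {j\<in>{0..<n}. v < X ! j}"
  have lL: "length (filter (\<lambda>x. x < u) X) = nL" unfolding nL_def n_def by (rule X_count)
  have lR: "length (filter (\<lambda>x. v < x) X) = nR" unfolding nR_def n_def by (rule X_count)
  have lM: "length (filter (\<lambda>x. u < x \<and> x < v) X) = nM" unfolding nM_def n_def by (rule X_count)
  have fc: "final_cost costR X k u v =
     (if nL < k \<and> k \<le> nL + nU then 0
         else if nL + nU + nM < k \<and> k \<le> n - nR then 0
         else if k \<le> nL then costR (filter (\<lambda>x. x < u) X) k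
         else if n - nR < k then costR (filter (\<lambda>x. v < x) X) (k - (n - nR))
         else costR (filter (\<lambda>x. u < x \<and> x < v) X) (k - (nL + nU)))"
    unfolding final_cost_def Let_def nL_def nU_def nM_def nR_def n_def by simp
  have BL': "k \<le> nL \<Longrightarrow> real nL \<le> B" using BL unfolding nL_def n_def by simp
  have BR': "n - nR < k \<Longrightarrow> real nR \<le> B" using BR unfolding nR_def n_def by simp
  have BM': "real nM \<le> B" using BM unfolding nM_def n_def by simp
  have nRn: "nR \<le> n" unfolding nR_def
    using card_mono[of "{0..<n}" "{j\<in>{0..<n}. v < X ! j}"] by fastforce
  show ?thesis
  proof (cases "nL < k \<and> k \<le> nL + nU \<or> nL + nU + nM < k \<and> k \<le> n - nR")
    case True thus ?thesis using fc \<gamma> B0 by auto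
  next
    case nz: False
    show ?thesis
    proof (cases "k \<le> nL")
      case True
      have "real (costR (filter (\<lambda>x. x < u) X) k) \<le> \<gamma>P * real nL"
        using cR[of k "filter (\<lambda>x. x < u) X"] k True lL by simp
      also have "\<dots> \<le> \<gamma>P * B" using BL' True \<gamma> by (intro mult_left_mono) auto
      finally show ?thesis using fc nz True by simp
    next
      case nL: False
      show ?thesis
      proof (cases "n - nR < k")
        case True
        have "real (costR (filter (\<lambda>x. v < x) X) (k - (n - nR))) \<le> \<gamma>P * real nR"
          using cR[of "k - (n - nR)" "filter (\<lambda>x. v < x) X"] k True lR nRn n_def by simp
        also have "\<dots> \<le> \<gamma>P * B" using BR' True \<gamma> by (intro mult_left_mono) auto
        finally show ?thesis using fc nz nL True by simp
      next
        case nR: False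
        have r1: "1 \<le> k - (nL + nU)" using nz nL nR by auto
        have r2: "k - (nL + nU) \<le> nM" using nz nL nR by auto
        have "real (costR (filter (\<lambda>x. u < x \<and> x < v) X) (k - (nL + nU))) \<le> \<gamma>P * real nM"
          using cR[of "k - (nL + nU)" "filter (\<lambda>x. u < x \<and> x < v) X"] r1 r2 lM by simp
        also have "\<dots> \<le> \<gamma>P * B" using BM' \<gamma> by (intro mult_left_mono) auto
        finally show ?thesis using fc nz nL nR by simp
      qed
    qed
  qed
qed

lemma part_bound:
  fixes X :: "'a::linorder list"
  shows "part_cost X k I u v \<le> (length X - card I) +
     (if u = v then 0 else if real k < real (length X) / 2
        then card {j\<in>{0..<length X}. X ! j < v} else card {j\<in>{0..<length X}. u < X ! j})"
proof -
  have "card {j \<in> {0..<length X} - I. X ! j < v} \<le> card {j\<in>{0..<length X}. X ! j < v}"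
    by (rule card_mono) auto
  moreover have "card {j \<in> {0..<length X} - I. u < X ! j} \<le> card {j\<in>{0..<length X}. u < X ! j}"
    by (rule card_mono) auto
  ultimately show ?thesis unfolding part_cost_def by auto
qed


lemma select_cost_split:
  fixes X :: "'a::linorder list"
  assumes "idx_u \<alpha> \<beta> (length X) k = iu" "idx_v \<alpha> \<beta> (length X) k = iv"
  shows "select_cost costR \<alpha> \<beta> X k I =
     costR (sample_list X I) iu + costR (sample_list X I) iv
     + part_cost X k I (sort (sample_list X I) ! (iu - 1)) (sort (sample_list X I) ! (iv - 1))
     + final_cost costR X k (sort (sample_list X I) ! (iu - 1)) (sort (sample_list X I) ! (iv - 1))"
  using assms unfolding select_cost_def Let_def pivot_u_def pivot_v_def by simp

lemma det_all:
  fixes X :: "'a::linorder list" and \<gamma>P :: real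
  assumes cR: "\<And>xs i. 1 \<le> i \<Longrightarrow> i \<le> length xs \<Longrightarrow> real (costR xs i) \<le> \<gamma>P * real (length xs)"
    and \<gamma>: "\<gamma>P \<ge> 0"
    and I: "I \<subseteq> {0..<length X}" "card I = s"
    and idx: "idx_u \<alpha> \<beta> (length X) k = iu" "idx_v \<alpha> \<beta> (length X) k = iv"
    and iuv: "1 \<le> iu" "iu \<le> s" "1 \<le> iv" "iv \<le> s"
    and k: "1 \<le> k" "k \<le> length X"
  shows "real (select_cost costR \<alpha> \<beta> X k I) \<le> 2 * \<gamma>P * real s + 2 * real (length X) - real s + \<gamma>P * real (length X)"
proof -
  define n where "n = length X"
  define S where "S = sample_list X I"
  define u where "u = sort S ! (iu - 1)"
  define v where "v = sort S ! (iv - 1)"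
  have finI: "finite I" using I finite_subset by blast
  have lenS: "length S = s" using I finI by (simp add: S_def sample_list_def)
  have sn: "s \<le> n" using I unfolding n_def by (metis card_atLeastLessThan card_mono diff_zero finite_atLeastLessThan)
  have c1: "real (costR S iu) \<le> \<gamma>P * real s" using cR[of iu S] iuv lenS by simp
  have c2: "real (costR S iv) \<le> \<gamma>P * real s" using cR[of iv S] iuv lenS by simp
  have cardle: "card {j\<in>{0..<n}. P j} \<le> n" for P
    using card_mono[of "{0..<n}" "{j\<in>{0..<n}. P j}"] by fastforce
  have cardle2: "card {j. j < n \<and> P j} \<le> n" for P
    using card_mono[of "{..<n}" "{j. j < n \<and> P j}"] by auto
  have pc: "real (part_cost X k I u v) \<le> real (n - s) + real n"
  proof -
    have "(if u = v then 0 else if real k < real n / 2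
        then card {j\<in>{0..<n}. X ! j < v} else card {j\<in>{0..<n}. u < X ! j}) \<le> n"
      using cardle by auto
    hence "part_cost X k I u v \<le> (n - s) + n"
      using part_bound[of X k I u v] I unfolding n_def[symmetric] by linarith
    thus ?thesis by linarith
  qed
  have fc: "real (final_cost costR X k u v) \<le> \<gamma>P * real n"
    by (rule final_bound[OF cR k \<gamma>]) (auto simp: n_def[symmetric] cardle2)
  have "real (select_cost costR \<alpha> \<beta> X k I) = real (costR S iu) + real (costR S iv) + real (part_cost X k I u v) + real (final_cost costR X k u v)"
    using select_cost_split[OF idx, of costR I] unfolding S_def u_def v_def by simp
  also have "\<dots> \<le> \<gamma>P * real s + \<gamma>P * real s + (real (n - s) + real n) + \<gamma>P * real n"
    using c1 c2 pc fc by linarith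
  also have "\<dots> = 2 * \<gamma>P * real s + 2 * real (length X) - real s + \<gamma>P * real (length X)"
    using sn by (simp add: n_def of_nat_diff)
  finally show ?thesis .
qed


lemma det_good:
  fixes X :: "'a::linorder list" and \<gamma>P D :: real
  assumes cR: "\<And>xs i. 1 \<le> i \<Longrightarrow> i \<le> length xs \<Longrightarrow> real (costR xs i) \<le> \<gamma>P * real (length xs)"
    and \<gamma>: "\<gamma>P \<ge> 0" and D: "D \<ge> 0"
    and I: "I \<subseteq> {0..<length X}" "card I = s"
    and idx: "idx_u \<alpha> \<beta> (length X) k = iu" "idx_v \<alpha> \<beta> (length X) k = iv"
    and iuv: "1 \<le> iu" "iu \<le> iv" "iv \<le> s"
    and k: "1 \<le> k" "k \<le> length X"
    and NLV: "card {j\<in>{0..<length X}. X ! j < sort (sample_list X I) ! (iv - 1)} < m1"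
    and NGU: "card {j\<in>{0..<length X}. sort (sample_list X I) ! (iu - 1) < X ! j} + m2 < length X"
    and m1r: "real m1 < real k + 2 * D + 1" and m2r: "real k - 2 * D \<le> real m2 + 1"
    and cL: "k \<le> card {j\<in>{0..<length X}. X ! j < sort (sample_list X I) ! (iu - 1)} \<Longrightarrow> real k \<le> D"
    and cRR: "length X - card {j\<in>{0..<length X}. sort (sample_list X I) ! (iv - 1) < X ! j} < k \<Longrightarrow> real (length X) - real k < D"
  shows "real (select_cost costR \<alpha> \<beta> X k I) \<le> real (length X) + real (min k (length X - k)) + (2 * \<gamma>P - 1) * real s + (4 * \<gamma>P + 2) * D"
proof -
  define n where "n = length X"
  define S where "S = sample_list X I"
  define u where "u = sort S ! (iu - 1)"
  define v where "v = sort S ! (iv - 1)"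
  define nlv where "nlv = card {j\<in>{0..<n}. X ! j < v}"
  define ngu where "ngu = card {j\<in>{0..<n}. u < X ! j}"
  have NLV': "nlv < m1" using NLV unfolding nlv_def n_def v_def S_def .
  have NGU': "ngu + m2 < n" using NGU unfolding ngu_def n_def u_def S_def .
  have finI: "finite I" using I finite_subset by blast
  have lenS: "length S = s" using I finI by (simp add: S_def sample_list_def)
  have sn: "s \<le> n" using I unfolding n_def by (metis card_atLeastLessThan card_mono diff_zero finite_atLeastLessThan)
  have c1: "real (costR S iu) \<le> \<gamma>P * real s" using cR[of iu S] iuv lenS by simp
  have c2: "real (costR S iv) \<le> \<gamma>P * real s" using cR[of iv S] iuv lenS by simp
  have uv: "u \<le> v" unfolding u_def v_def using iuv lenS by (intro sorted_nth_mono) auto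
  have nlv_r: "real nlv < real k + 2 * D" using NLV' m1r by linarith
  have "real ngu + real m2 + 1 \<le> real n" using NGU' by linarith
  hence ngu_r: "real ngu \<le> real n - real k + 2 * D" using m2r by linarith
  have pc: "real (part_cost X k I u v) \<le> real (n - s) + real (min k (n - k)) + 2 * D"
  proof -
    have ex: "real (if u = v then 0 else if real k < real n / 2 then nlv else ngu) \<le> real (min k (n - k)) + 2 * D"
      using nlv_r ngu_r D k n_def by (auto simp: min_def of_nat_diff)
    have "part_cost X k I u v \<le> (n - s) + (if u = v then 0 else if real k < real n / 2 then nlv else ngu)"
      using part_bound[of X k I u v] I unfolding n_def[symmetric] nlv_def ngu_def by simp
    hence "real (part_cost X k I u v) \<le> real (n - s) + real (if u = v then 0 else if real k < real n / 2 then nlv else ngu)"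
      by (metis of_nat_add of_nat_le_iff)
    thus ?thesis using ex by linarith
  qed
  have fc: "real (final_cost costR X k u v) \<le> \<gamma>P * (4 * D)"
  proof (rule final_bound[OF cR k \<gamma>])
    show "0 \<le> 4 * D" using D by simp
  next
    assume kL: "k \<le> card {j\<in>{0..<length X}. X ! j < u}"
    have "card {j\<in>{0..<length X}. X ! j < u} \<le> nlv"
      unfolding nlv_def n_def using uv by (intro card_mono) auto
    moreover have "real k \<le> D" using cL kL unfolding u_def S_def by simp
    ultimately show "real (card {j\<in>{0..<length X}. X ! j < u}) \<le> 4 * D" using nlv_r D by linarith
  next
    assume kR: "length X - card {j\<in>{0..<length X}. v < X ! j} < k"
    have "card {j\<in>{0..<length X}. v < X ! j} \<le> ngu"
      unfolding ngu_def n_def using uv by (intro card_mono) auto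
    moreover have "real n - real k < D" using cRR kR unfolding v_def S_def n_def by simp
    ultimately show "real (card {j\<in>{0..<length X}. v < X ! j}) \<le> 4 * D" using ngu_r D by linarith
  next
    show "real (card {j\<in>{0..<length X}. u < X ! j \<and> X ! j < v}) \<le> 4 * D"
    proof (cases "u = v")
      case True
      hence e: "{j\<in>{0..<length X}. u < X ! j \<and> X ! j < v} = {}" by auto
      show ?thesis unfolding e using D by simp
    next
      case False
      hence uv': "u < v" using uv by simp
      define A where "A = {j\<in>{0..<n}. X ! j < v}"
      define B where "B = {j\<in>{0..<n}. u < X ! j}"
      have AB: "A \<union> B = {0..<n}" using uv' unfolding A_def B_def by auto
      have AiB: "A \<inter> B = {j\<in>{0..<length X}. u < X ! j \<and> X ! j < v}" unfolding A_def B_def n_def by auto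
      have "card (A \<union> B) + card (A \<inter> B) = card A + card B"
        using card_Un_Int[of A B] by (simp add: A_def B_def)
      hence "n + card {j\<in>{0..<length X}. u < X ! j \<and> X ! j < v} = nlv + ngu"
        using AB AiB unfolding A_def B_def nlv_def ngu_def by simp
      hence "real (card {j\<in>{0..<length X}. u < X ! j \<and> X ! j < v}) = real nlv + real ngu - real n"
        by (metis add_diff_cancel_left' of_nat_add)
      thus ?thesis using nlv_r ngu_r by linarith
    qed
  qed
  have "real (select_cost costR \<alpha> \<beta> X k I) = real (costR S iu) + real (costR S iv) + real (part_cost X k I u v) + real (final_cost costR X k u v)"
    using select_cost_split[OF idx, of costR I] unfolding S_def u_def v_def by simp
  also have "\<dots> \<le> \<gamma>P * real s + \<gamma>P * real s + (real (n - s) + real (min k (n - k)) + 2 * D) + \<gamma>P * (4 * D)"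
    using c1 c2 pc fc by linarith
  also have "\<dots> = real (length X) + real (min k (length X - k)) + (2 * \<gamma>P - 1) * real s + (4 * \<gamma>P + 2) * D"
    using sn by (simp add: n_def of_nat_diff algebra_simps)
  finally show ?thesis .
qed

lemma fS_pos: "n \<ge> 2 \<Longrightarrow> fS n > 0"
  unfolding fS_def by simp

lemma fS_cube:
  assumes "n \<ge> 2"
  shows "fS n ^ 3 = real n ^ 2 * ln (real n)"
proof -
  have ln: "ln (real n) > 0" using assms by simp
  have n0: "real n \<noteq> 0" using assms by simp
  have "fS n ^ 3 = (real n powr (2/3)) ^ 3 * (ln (real n) powr (1/3)) ^ 3"
    unfolding fS_def by (simp add: power_mult_distrib)
  also have "\<dots> = real n powr 2 * ln (real n) powr 1"
    using ln n0 by (simp add: powr_power)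
  also have "\<dots> = real n ^ 2 * ln (real n)" using ln by simp
  finally show ?thesis .
qed

lemma fS_mono:
  assumes "3 \<le> n"
  shows "fS 3 \<le> fS n"
proof -
  have "real 3 powr (2/3) \<le> real n powr (2/3)" using assms by (intro powr_mono2) auto
  moreover have "ln (real 3) powr (1/3) \<le> ln (real n) powr (1/3)" using assms by (intro powr_mono2) auto
  moreover have "ln (real 3) powr (1/3) \<ge> 0" by simp
  moreover have "real n powr (2/3) \<ge> 0" by simp
  ultimately show ?thesis unfolding fS_def by (intro mult_mono) auto
qed

lemma ln3: "ln (3::real) \<ge> 1"
proof -
  have "exp 1 \<le> (3::real)" by (rule exp_le)
  hence "ln (exp 1) \<le> ln (3::real)" by (subst ln_le_cancel_iff) auto
  thus ?thesis by simp
qed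

lemma tail_num:
  fixes \<gamma>P \<beta> q :: real
  assumes n: "n \<ge> 3" and \<gamma>: "\<gamma>P \<ge> 2" and \<beta>: "\<beta> \<ge> 1/6" and q: "0 \<le> q" "q \<le> 1" "q \<le> 4 * real n powr (-2 * \<beta>)"
  shows "(\<gamma>P + 1) * real n * q \<le> (4 * \<gamma>P + 2) * fS n"
proof -
  have npos: "real n > 0" using n by simp
  have "ln 3 \<le> ln (real n)" using n by (subst ln_le_cancel_iff) auto
  hence lnn: "ln (real n) \<ge> 1" using ln3 by linarith
  have split: "real n = real n powr (2/3) * real n powr (1/3)"
    using npos by (simp flip: powr_add)
  show ?thesis
  proof (cases "n \<le> 8")
    case True
    have "real n powr (1/3) \<le> real 8 powr (1/3)" using True by (intro powr_mono2) auto
    also have "real 8 powr (1/3) = ((2::real) powr 3) powr (1/3)" by simp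
    also have "\<dots> = 2" by (simp add: powr_powr)
    finally have n13: "real n powr (1/3) \<le> 2" .
    have l13: "ln (real n) powr (1/3) \<ge> 1" using lnn by (intro ge_one_powr_ge_zero) auto
    have "(\<gamma>P + 1) * real n * q \<le> (\<gamma>P + 1) * real n" using q \<gamma> npos by (simp add: mult_left_le)
    also have "\<dots> = (\<gamma>P + 1) * real n powr (1/3) * real n powr (2/3)" using split by (simp add: mult_ac)
    also have "\<dots> \<le> (\<gamma>P + 1) * 2 * real n powr (2/3)"
      using n13 \<gamma> by (intro mult_right_mono mult_left_mono) auto
    also have "\<dots> \<le> (4 * \<gamma>P + 2) * (real n powr (2/3) * 1)" using \<gamma> by (simp add: algebra_simps)
    also have "\<dots> \<le> (4 * \<gamma>P + 2) * (real n powr (2/3) * ln (real n) powr (1/3))"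
      using l13 \<gamma> by (intro mult_left_mono) auto
    finally show ?thesis unfolding fS_def .
  next
    case False
    hence n9: "real n \<ge> 9" by simp
    have "ln (real n) \<ge> ln 9" using n9 by (subst ln_le_cancel_iff) auto
    moreover have "ln (9::real) = 2 * ln 3"
      using ln_mult[of 3 3] by simp
    ultimately have ln2: "ln (real n) \<ge> 2" using ln3 by linarith
    have "(6/5::real) = ((6/5) powr 3) powr (1/3)" by (subst powr_powr) simp
    also have "\<dots> \<le> 2 powr (1/3)" by (intro powr_mono2) (auto simp: power3_eq_cube)
    also have "\<dots> \<le> ln (real n) powr (1/3)" using ln2 by (intro powr_mono2) auto
    finally have l13: "ln (real n) powr (1/3) \<ge> 6/5" .
    have "q \<le> 4 * real n powr (-2 * \<beta>)" by (rule q(3))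
    also have "\<dots> \<le> 4 * real n powr (- (1/3))" using \<beta> n9 by (intro mult_left_mono powr_mono) auto
    finally have q': "q \<le> 4 * real n powr (- (1/3))" .
    have "(\<gamma>P + 1) * real n * q \<le> (\<gamma>P + 1) * real n * (4 * real n powr (- (1/3)))"
      using q' \<gamma> npos by (intro mult_left_mono) auto
    also have "\<dots> = 4 * (\<gamma>P + 1) * (real n powr (2/3) * real n powr (1/3) * real n powr (- (1/3)))"
      using split by simp
    also have "real n powr (2/3) * real n powr (1/3) * real n powr (- (1/3)) = real n powr (2/3)"
      using npos by (simp add: powr_minus field_simps)
    also have "4 * (\<gamma>P + 1) * real n powr (2/3) \<le> (4 * \<gamma>P + 2) * (6/5) * real n powr (2/3)"
      using \<gamma> by (intro mult_right_mono) auto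
    also have "\<dots> \<le> (4 * \<gamma>P + 2) * (real n powr (2/3) * ln (real n) powr (1/3))"
    proof -
      have "(6/5) * real n powr (2/3) \<le> ln (real n) powr (1/3) * real n powr (2/3)"
        using l13 by (intro mult_right_mono) auto
      hence "(4 * \<gamma>P + 2) * ((6/5) * real n powr (2/3)) \<le> (4 * \<gamma>P + 2) * (ln (real n) powr (1/3) * real n powr (2/3))"
        using \<gamma> by (intro mult_left_mono) auto
      thus ?thesis by (simp add: algebra_simps)
    qed
    finally show ?thesis unfolding fS_def .
  qed
qed

theorem theorem5p1:
  fixes \<alpha> \<beta> \<gamma>P :: real and X :: "'a::linorder list" and k :: nat
    and costR :: "'a list \<Rightarrow> nat \<Rightarrow> nat"
  defines "n \<equiv> length X"
  defines "p \<equiv> pmf_of_set (samples n (sampsz \<alpha> n))"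
  defines "c \<equiv> (\<lambda>I. real (select_cost costR \<alpha> \<beta> X k I))"
  assumes "\<alpha> > 0" and "\<beta> > 0" and "\<gamma>P > 2"
    and "\<And>xs i. 1 \<le> i \<Longrightarrow> i \<le> length xs \<Longrightarrow> real (costR xs i) \<le> \<gamma>P * real (length xs)"
    and "1 \<le> k" and "k \<le> n"
    and "sampsz \<alpha> n < n - 1"
  shows "measure_pmf.prob p
           {I. c I \<le> real n + real (min k (n - k)) + gamma_hat \<alpha> \<beta> \<gamma>P (fS n) * fS n}
           \<ge> 1 - 4 * real n powr (-2 * \<beta>)
       \<and> measure_pmf.prob p
           {I. c I \<le> real n + real (min k (n - k)) + gamma_hat \<alpha> \<beta> \<gamma>P (fS 3) * fS n}
           \<ge> 1 - 4 * real n powr (-2 * \<beta>)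
       \<and> (\<beta> \<ge> 1/6 \<longrightarrow> measure_pmf.expectation p c
           \<le> real n + real (min k (n - k)) + (gamma_hat \<alpha> \<beta> \<gamma>P (fS n) + 4 * \<gamma>P + 2) * fS n)"
proof -
  note \<alpha> = \<open>\<alpha> > 0\<close> and \<beta> = \<open>\<beta> > 0\<close> and \<gamma> = \<open>\<gamma>P > 2\<close>
  note cR = \<open>\<And>xs i. 1 \<le> i \<Longrightarrow> i \<le> length xs \<Longrightarrow> real (costR xs i) \<le> \<gamma>P * real (length xs)\<close>
  note k1 = \<open>1 \<le> k\<close> and kn = \<open>k \<le> n\<close>
  define s where "s = sampsz \<alpha> n"
  define F where "F = fS n"
  define g where "g = gapS \<alpha> \<beta> n"
  define r where "r = real k * real s / real n"
  define iu where "iu = idx_u \<alpha> \<beta> n k"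
  define iv where "iv = idx_v \<alpha> \<beta> n k"
  define \<Omega> where "\<Omega> = samples n s"
  define Dg where "Dg = g * real n / real s"
  have slt: "s < n - 1" using \<open>sampsz \<alpha> n < n - 1\<close> s_def by simp
  have n2: "n \<ge> 2" using slt by linarith
  have lnpos: "ln (real n) > 0" using n2 by simp
  have Fpos: "F > 0" unfolding F_def using n2 by (rule fS_pos)
  have s_eq: "s = nat \<lceil>\<alpha> * F\<rceil>" using slt unfolding s_def sampsz_def F_def by simp
  have aF: "\<alpha> * F > 0" using \<alpha> Fpos by simp
  have s1: "s \<ge> 1" using aF unfolding s_eq by linarith
  have n3: "n \<ge> 3" using s1 slt by linarith
  have s_ge: "\<alpha> * F \<le> real s" using aF unfolding s_eq by linarith
  have s_lt: "real s < \<alpha> * F + 1" using aF unfolding s_eq by linarith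
  have sn: "s \<le> n" using slt by linarith
  have g_eq: "g = sqrt (\<beta> * real s * ln (real n))" unfolding g_def gapS_def s_def ..
  have gpos: "g > 0" unfolding g_eq using \<beta> s1 lnpos by simp
  have g2: "g\<^sup>2 = \<beta> * real s * ln (real n)" unfolding g_eq using \<beta> s1 lnpos by simp
  have Dg_pos: "Dg > 0" unfolding Dg_def using gpos s1 n2 by simp
  have Dgs: "Dg * real s / real n = g" unfolding Dg_def using s1 n2 by simp
  have Dg_le: "Dg \<le> sqrt (\<beta> / \<alpha>) * F"
  proof -
    have F3: "F ^ 3 = real n ^ 2 * ln (real n)" unfolding F_def using n2 by (rule fS_cube)
    have "Dg\<^sup>2 = g\<^sup>2 * real n ^ 2 / real s ^ 2" unfolding Dg_def by (simp add: power_divide power_mult_distrib)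
    also have "\<dots> = real s * (\<beta> * (real n ^ 2 * ln (real n))) / (real s * real s)"
      unfolding g2 power2_eq_square[of "real s"] by (simp add: mult_ac)
    also have "\<dots> = \<beta> * (real n ^ 2 * ln (real n)) / real s" using s1 by simp
    also have "\<dots> = \<beta> * F ^ 3 / real s" using F3 by simp
    also have "\<dots> \<le> \<beta> * F ^ 3 / (\<alpha> * F)"
    proof -
      have "0 \<le> \<beta> * F ^ 3" using \<beta> Fpos by simp
      moreover have "0 < real s * (\<alpha> * F)" using s1 aF by simp
      ultimately show ?thesis using divide_left_mono[OF s_ge] by blast
    qed
    also have "\<dots> = \<beta> / \<alpha> * F\<^sup>2"
      using Fpos \<alpha> by (simp add: power3_eq_cube power2_eq_square)
    also have "\<dots> = (sqrt (\<beta> / \<alpha>) * F)\<^sup>2"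
      using \<alpha> \<beta> by (simp add: power_mult_distrib)
    finally have "Dg\<^sup>2 \<le> (sqrt (\<beta> / \<alpha>) * F)\<^sup>2" .
    moreover have "0 \<le> sqrt (\<beta> / \<alpha>) * F" using \<alpha> \<beta> Fpos by simp
    ultimately show ?thesis by (rule power2_le_imp_le)
  qed
  have iu_eq: "iu = max (nat \<lceil>r - g\<rceil>) 1" unfolding iu_def idx_u_def r_def g_def s_def ..
  have iv_eq: "iv = min (nat \<lceil>r + g\<rceil>) s" unfolding iv_def idx_v_def r_def g_def s_def ..
  have r_pos: "r > 0" unfolding r_def using k1 s1 n2 by simp
  have r_le: "r \<le> real s"
  proof -
    have "real k * real s \<le> real n * real s" using kn by (intro mult_right_mono) auto
    thus ?thesis unfolding r_def using n2 by (simp add: divide_le_eq mult.commute)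
  qed
  have iu1: "1 \<le> iu" unfolding iu_eq by simp
  have ius: "iu \<le> s"
  proof -
    have "\<lceil>r - g\<rceil> \<le> int s" using r_le gpos by (simp add: ceiling_le_iff)
    thus ?thesis unfolding iu_eq using s1 r_le gpos by simp
  qed
  have iv1: "1 \<le> iv"
  proof -
    have "0 < \<lceil>r + g\<rceil>" using r_pos gpos by (simp add: zero_less_ceiling) 
    hence "1 \<le> nat \<lceil>r + g\<rceil>" by linarith
    thus ?thesis unfolding iv_eq using s1 by simp
  qed
  have ivs: "iv \<le> s" unfolding iv_eq by simp
  have iuv: "iu \<le> iv"
  proof -
    have "\<lceil>r - g\<rceil> \<le> \<lceil>r + g\<rceil>" using gpos by (intro ceiling_mono) simp
    hence "nat \<lceil>r - g\<rceil> \<le> nat \<lceil>r + g\<rceil>" by (rule nat_mono)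
    moreover have "nat \<lceil>r - g\<rceil> \<le> s" using ius iu_eq by simp
    ultimately show ?thesis unfolding iu_eq iv_eq using iv1 iv_eq ius by simp
  qed
  have iu_ge: "real iu \<ge> r - g" unfolding iu_eq by linarith
  have iv_ge: "\<lceil>r + g\<rceil> \<le> int s \<Longrightarrow> real iv \<ge> r + g" unfolding iv_eq by linarith
  have iv_lt: "real iv < r + g + 1" unfolding iv_eq using r_pos gpos by linarith
  obtain R where R: "\<And>m. m \<le> n \<Longrightarrow> R m \<subseteq> {0..<n} \<and> card (R m) = m \<and>
            (\<forall>j\<in>R m. \<forall>j'\<in>{0..<n} - R m. X ! j \<le> X ! j')"
    using exists_R[of X] unfolding n_def by blast
  define m1 where "m1 = min (nat \<lceil>real k + 2 * Dg\<rceil>) n"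
  define m2 where "m2 = nat (\<lceil>real k - 2 * Dg\<rceil> - 1)"
  have m1n: "m1 \<le> n" unfolding m1_def by simp
  have m2n: "m2 \<le> n"
  proof -
    have "\<lceil>real k - 2 * Dg\<rceil> \<le> int k" using Dg_pos by (simp add: ceiling_le_iff)
    thus ?thesis unfolding m2_def using kn by linarith
  qed
  have m1r: "real m1 < real k + 2 * Dg + 1" unfolding m1_def using Dg_pos by linarith
  have m1l: "m1 < n \<Longrightarrow> real k + 2 * Dg \<le> real m1" unfolding m1_def using Dg_pos by linarith
  have m2r: "real k - 2 * Dg \<le> real m2 + 1" unfolding m2_def by linarith
  have m2l: "1 \<le> m2 \<Longrightarrow> real m2 < real k - 2 * Dg" unfolding m2_def by linarith
  define H where "H = (\<lambda>m I. card (I \<inter> R m))"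
  define Good where "Good = (\<lambda>I. iv \<le> H m1 I \<and> H m2 I < iu \<and> (1 \<le> \<lceil>r - g\<rceil> \<longrightarrow> iu \<le> H k I)
      \<and> (\<lceil>r + g\<rceil> \<le> int s \<longrightarrow> H (k - 1) I < iv))"
  have \<Omega>_eq: "\<Omega> = {I. I \<subseteq> {0..<n} \<and> card I = s}" unfolding \<Omega>_def samples_def ..
  have fin\<Omega>: "finite \<Omega>" unfolding \<Omega>_eq by (auto intro: finite_subset[of _ "Pow {0..<n}"])
  have card\<Omega>: "card \<Omega> = n choose s" unfolding \<Omega>_eq using n_subsets[of "{0..<n}" s] by simp
  have C_pos: "(n choose s) > 0" using sn by simp
  have p_eq: "p = pmf_of_set \<Omega>" unfolding p_def \<Omega>_def s_def ..
  have \<Omega>ne: "\<Omega> \<noteq> {}" using card\<Omega> C_pos by auto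
  have Rm: "\<And>m. m \<le> n \<Longrightarrow> R m \<subseteq> {0..<n}" and Rc: "\<And>m. m \<le> n \<Longrightarrow> card (R m) = m"
    and Rl: "\<And>m. m \<le> n \<Longrightarrow> \<forall>j\<in>R m. \<forall>j'\<in>{0..<n} - R m. X ! j \<le> X ! j'"
    using R by blast+
  have samp: "card {j\<in>I. X ! j < sort (sample_list X I) ! (i-1)} \<le> i - 1 \<and>
      card {j\<in>I. sort (sample_list X I) ! (i-1) < X ! j} \<le> s - i"
    if I: "I \<in> \<Omega>" and i: "1 \<le> i" "i \<le> s" for I i
  proof -
    have Isub: "I \<subseteq> {0..<n}" and cI: "card I = s" using I unfolding \<Omega>_eq by auto
    have finI: "finite I" using Isub finite_subset by blast
    have lenS: "length (sample_list X I) = s" using cI finI by (simp add: sample_list_def)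
    show ?thesis using sort_counts[of i "sample_list X I"] i lenS
      unfolding sample_count[OF finI] by simp
  qed
  have kr: "real k = r * real n / real s" unfolding r_def using s1 n2 by (simp add: field_simps)
  have det: "c I \<le> real n + real (min k (n - k)) + (2 * \<gamma>P - 1) * real s + (4 * \<gamma>P + 2) * Dg"
    if I: "I \<in> \<Omega>" and G: "Good I" for I
  proof -
    have Isub: "I \<subseteq> {0..<n}" and cI: "card I = s" using I unfolding \<Omega>_eq by auto
    define u where "u = sort (sample_list X I) ! (iu - 1)"
    define v where "v = sort (sample_list X I) ! (iv - 1)"
    have cu: "card {j\<in>I. X ! j < u} \<le> iu - 1" "card {j\<in>I. u < X ! j} \<le> s - iu"
      using samp[OF I iu1 ius] unfolding u_def by auto
    have cv: "card {j\<in>I. X ! j < v} \<le> iv - 1" "card {j\<in>I. v < X ! j} \<le> s - iv"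
      using samp[OF I iv1 ivs] unfolding v_def by auto
    have G1: "iv \<le> card (I \<inter> R m1)" and G2: "card (I \<inter> R m2) < iu"
      and G3: "1 \<le> \<lceil>r - g\<rceil> \<Longrightarrow> iu \<le> card (I \<inter> R k)"
      and G4: "\<lceil>r + g\<rceil> \<le> int s \<Longrightarrow> card (I \<inter> R (k - 1)) < iv"
      using G unfolding Good_def H_def by auto
    have NLV: "card {j\<in>{0..<n}. X ! j < v} < m1"
      by (rule lowerA[OF Rm[OF m1n] Rc[OF m1n] Rl[OF m1n] Isub cv(1) iv1 G1])
    have NGU: "card {j\<in>{0..<n}. u < X ! j} + m2 < n"
      by (rule upperB[OF Rm[OF m2n] Rc[OF m2n] Rl[OF m2n] Isub cI cu(2) iu1 ius G2])
    have cL: "real k \<le> Dg" if kL: "k \<le> card {j\<in>{0..<n}. X ! j < u}"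
    proof (cases "1 \<le> \<lceil>r - g\<rceil>")
      case True
      have "card {j\<in>{0..<n}. X ! j < u} < k"
        by (rule lowerA[OF Rm[OF kn] Rc[OF kn] Rl[OF kn] Isub cu(1) iu1 G3[OF True]])
      thus ?thesis using kL by simp
    next
      case False
      hence "r \<le> g" by linarith
      hence "r * real n / real s \<le> g * real n / real s" using s1 n2
        by (intro divide_right_mono mult_right_mono) auto
      thus ?thesis unfolding kr Dg_def .
    qed
    have cRR: "real n - real k < Dg" if kR: "n - card {j\<in>{0..<n}. v < X ! j} < k"
    proof (cases "\<lceil>r + g\<rceil> \<le> int s")
      case True
      have kn1: "k - 1 \<le> n" using kn by simp
      have "card {j\<in>{0..<n}. v < X ! j} + (k - 1) < n"
        by (rule upperB[OF Rm[OF kn1] Rc[OF kn1] Rl[OF kn1] Isub cI cv(2) iv1 ivs G4[OF True]])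
      thus ?thesis using kR by linarith
    next
      case False
      hence "real s - r < g" by linarith
      hence "(real s - r) * real n / real s < g * real n / real s" using s1 n2
        by (intro divide_strict_right_mono mult_strict_right_mono) auto
      moreover have "(real s - r) * real n / real s = real n - real k"
        unfolding kr using s1 by (simp add: field_simps)
      ultimately show ?thesis unfolding Dg_def by simp
    qed
    have idxu: "idx_u \<alpha> \<beta> (length X) k = iu" and idxv: "idx_v \<alpha> \<beta> (length X) k = iv"
      unfolding iu_def iv_def n_def by simp_all
    have "real (select_cost costR \<alpha> \<beta> X k I) \<le> real (length X) + real (min k (length X - k)) + (2 * \<gamma>P - 1) * real s + (4 * \<gamma>P + 2) * Dg"
      using \<gamma> Dg_pos Isub cI idxu idxv iu1 iuv ivs k1 kn NLV NGU m1r m2r cL cRR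
      unfolding n_def u_def v_def
      by (intro det_good[OF cR]) auto
    thus ?thesis unfolding c_def n_def .
  qed
  define q where "q = real s / real n"
  have q_pos: "q > 0" unfolding q_def using s1 n2 by simp
  have rq: "r = real k * q" unfolding r_def q_def by simp
  have gq: "g = Dg * q" unfolding q_def using Dgs by simp
  have sq: "\<And>m. real s * real m / real n = real m * q" unfolding q_def by simp
  define E where "E = exp (-2 * g\<^sup>2 / real s)"
  have E_eq: "E = real n powr (-2 * \<beta>)"
  proof -
    have "-2 * g\<^sup>2 / real s = -2 * \<beta> * ln (real n)" unfolding g2 using s1 by simp
    thus ?thesis unfolding E_def powr_def using n2 by simp
  qed
  have tl: "real (card {I\<in>\<Omega>. real (card (I \<inter> R m)) \<le> real m * q - g}) \<le> real (n choose s) * E"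
    if m: "m \<le> n" for m
  proof -
    have cm: "card ({0..<n} \<inter> R m) = m" using Rm[OF m] Rc[OF m] by (simp add: Int_absorb1)
    show ?thesis using tail_lower[of "{0..<n}" s g "R m"] sn s1 gpos
      unfolding E_def \<Omega>_eq cm sq[symmetric] by simp
  qed
  have tu: "real (card {I\<in>\<Omega>. real m * q + g \<le> real (card (I \<inter> R m))}) \<le> real (n choose s) * E"
    if m: "m \<le> n" for m
  proof -
    have cm: "card ({0..<n} \<inter> R m) = m" using Rm[OF m] Rc[OF m] by (simp add: Int_absorb1)
    show ?thesis using tail_upper[of "{0..<n}" s g "R m"] sn s1 gpos
      unfolding E_def \<Omega>_eq cm sq[symmetric] by simp
  qed
  define B1 where "B1 = {I\<in>\<Omega>. real (card (I \<inter> R m1)) \<le> real m1 * q - g}"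
  define B2 where "B2 = {I\<in>\<Omega>. real m2 * q + g \<le> real (card (I \<inter> R m2))}"
  define B3 where "B3 = {I\<in>\<Omega>. real (card (I \<inter> R k)) \<le> real k * q - g}"
  define B4 where "B4 = {I\<in>\<Omega>. real (k - 1) * q + g \<le> real (card (I \<inter> R (k - 1)))}"
  have bad_sub: "{I\<in>\<Omega>. \<not> Good I} \<subseteq> B1 \<union> B2 \<union> B3 \<union> B4"
  proof
    fix I assume "I \<in> {I\<in>\<Omega>. \<not> Good I}"
    hence I: "I \<in> \<Omega>" and nG: "\<not> Good I" by auto
    have Isub: "I \<subseteq> {0..<n}" and cI: "card I = s" using I unfolding \<Omega>_eq by auto
    have finI: "finite I" using Isub finite_subset by blast
    consider "\<not> iv \<le> H m1 I" | "\<not> H m2 I < iu" | "1 \<le> \<lceil>r - g\<rceil>" "\<not> iu \<le> H k I"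
      | "\<lceil>r + g\<rceil> \<le> int s" "\<not> H (k - 1) I < iv"
      using nG unfolding Good_def by blast
    thus "I \<in> B1 \<union> B2 \<union> B3 \<union> B4"
    proof cases
      case 1
      have "m1 \<noteq> n"
      proof
        assume "m1 = n"
        hence "R m1 = {0..<n}" using Rm[OF m1n] Rc[OF m1n]
          by (metis card_subset_eq finite_atLeastLessThan card_atLeastLessThan diff_zero)
        hence "H m1 I = s" unfolding H_def using Isub cI by (simp add: Int_absorb2)
        thus False using 1 ivs by simp
      qed
      hence "m1 < n" using m1n by simp
      hence "real k + 2 * Dg \<le> real m1" by (rule m1l)
      hence "(real k + 2 * Dg) * q \<le> real m1 * q" using q_pos by (intro mult_right_mono) auto
      hence a: "r + 2 * g \<le> real m1 * q" unfolding rq gq by (simp add: algebra_simps)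
      have "real (H m1 I) + 1 \<le> real iv" using 1 by simp
      hence "real (H m1 I) < r + g" using iv_lt by linarith
      hence "I \<in> B1" using a I unfolding B1_def H_def by simp
      thus ?thesis by blast
    next
      case 2
      have "m2 \<noteq> 0"
      proof
        assume "m2 = 0"
        hence "R m2 = {}" using Rc[OF m2n] Rm[OF m2n] by (simp add: finite_subset)
        thus False using 2 iu1 unfolding H_def by simp
      qed
      hence "real m2 < real k - 2 * Dg" using m2l by simp
      hence "real m2 * q < (real k - 2 * Dg) * q" using q_pos by (intro mult_strict_right_mono) auto
      hence a: "real m2 * q < r - 2 * g" unfolding rq gq by (simp add: algebra_simps)
      have "real iu \<le> real (H m2 I)" using 2 by simp
      hence "real m2 * q + g \<le> real (H m2 I)" using a iu_ge by linarith
      hence "I \<in> B2" using I unfolding B2_def H_def by simp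
      thus ?thesis by blast
    next
      case 3
      have h: "(1::nat) \<le> nat \<lceil>r - g\<rceil>" using 3(1) by linarith
      have "iu = nat \<lceil>r - g\<rceil>" unfolding iu_eq using h by (rule max_absorb1)
      hence "real (H k I) + 1 \<le> real_of_int \<lceil>r - g\<rceil>" using 3 by linarith
      hence "real (H k I) \<le> real k * q - g" unfolding rq by linarith
      hence "I \<in> B3" using I unfolding B3_def H_def by simp
      thus ?thesis by blast
    next
      case 4
      have "real iv \<le> real (H (k - 1) I)" using 4 by simp
      moreover have "real (k - 1) * q \<le> real k * q" using q_pos by (intro mult_right_mono) auto
      ultimately have "real (k - 1) * q + g \<le> real (H (k - 1) I)" using iv_ge[OF 4(1)] unfolding rq by linarith
      hence "I \<in> B4" using I unfolding B4_def H_def by simp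
      thus ?thesis by blast
    qed
  qed
  have kn1: "k - 1 \<le> n" using kn by simp
  have bad: "real (card {I\<in>\<Omega>. \<not> Good I}) \<le> 4 * real (n choose s) * E"
  proof -
    have fins: "finite B1" "finite B2" "finite B3" "finite B4"
      using fin\<Omega> unfolding B1_def B2_def B3_def B4_def by auto
    have "card {I\<in>\<Omega>. \<not> Good I} \<le> card (B1 \<union> B2 \<union> B3 \<union> B4)"
      using bad_sub fins by (intro card_mono) auto
    also have "\<dots> \<le> card B1 + card B2 + card B3 + card B4"
      by (metis (no_types, lifting) add_le_mono card_Un_le le_refl order_trans)
    finally have "real (card {I\<in>\<Omega>. \<not> Good I}) \<le> real (card B1) + real (card B2) + real (card B3) + real (card B4)"
      by linarith
    also have "\<dots> \<le> real (n choose s) * E + real (n choose s) * E + real (n choose s) * E + real (n choose s) * E"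
      using tl[OF m1n] tu[OF m2n] tl[OF kn] tu[OF kn1] unfolding B1_def B2_def B3_def B4_def
      by linarith
    finally show ?thesis by (simp add: mult_ac)
  qed
  define Bg0 where "Bg0 = real n + real (min k (n - k)) + (2 * \<gamma>P - 1) * real s + (4 * \<gamma>P + 2) * Dg"
  define C where "C = real (n choose s)"
  define bd where "bd = real (card {I\<in>\<Omega>. \<not> Good I})"
  have C_pos': "C > 0" unfolding C_def using C_pos by simp
  have cardC: "real (card \<Omega>) = C" unfolding C_def card\<Omega> ..
  have bdC: "bd / C \<le> 4 * real n powr (-2 * \<beta>)"
    using bad C_pos' unfolding bd_def C_def E_eq by (simp add: divide_le_eq mult_ac)
  have bd_le: "bd \<le> C" unfolding bd_def cardC[symmetric] using fin\<Omega> by (intro of_nat_mono card_mono) auto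
  have good_card: "real (card {I\<in>\<Omega>. Good I}) = C - bd"
  proof -
    have e: "{I\<in>\<Omega>. \<not> Good I} = \<Omega> - {I\<in>\<Omega>. Good I}" by blast
    have "card {I\<in>\<Omega>. \<not> Good I} = card \<Omega> - card {I\<in>\<Omega>. Good I}"
      unfolding e using fin\<Omega> by (intro card_Diff_subset) auto
    moreover have "card {I\<in>\<Omega>. Good I} \<le> card \<Omega>" using fin\<Omega> by (intro card_mono) auto
    ultimately have "card {I\<in>\<Omega>. Good I} + card {I\<in>\<Omega>. \<not> Good I} = card \<Omega>" by linarith
    thus ?thesis unfolding bd_def cardC[symmetric] by linarith
  qed
  have prob_ge: "measure_pmf.prob p {I. c I \<le> B} \<ge> 1 - 4 * real n powr (-2 * \<beta>)" if B: "Bg0 \<le> B" for B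
  proof -
    have sub: "{I\<in>\<Omega>. Good I} \<subseteq> \<Omega> \<inter> {I. c I \<le> B}" using det B unfolding Bg0_def by fastforce
    have "measure_pmf.prob p {I. c I \<le> B} = real (card (\<Omega> \<inter> {I. c I \<le> B})) / real (card \<Omega>)"
      unfolding p_eq using measure_pmf_of_set[OF \<Omega>ne fin\<Omega>] by simp
    also have "\<dots> \<ge> (C - bd) / C"
      unfolding cardC good_card[symmetric] using C_pos' sub fin\<Omega>
      by (intro divide_right_mono of_nat_mono card_mono) auto
    finally have "measure_pmf.prob p {I. c I \<le> B} \<ge> 1 - bd / C" using C_pos' by (simp add: diff_divide_distrib)
    thus ?thesis using bdC by linarith
  qed
  have gh: "Bg0 \<le> real n + real (min k (n - k)) + gamma_hat \<alpha> \<beta> \<gamma>P F' * F" if F': "0 < F'" "F' \<le> F" for F'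
  proof -
    have "(4 * \<gamma>P + 2) * Dg \<le> (4 * \<gamma>P + 2) * (sqrt (\<beta> / \<alpha>) * F)" using Dg_le \<gamma> by (intro mult_left_mono) auto
    moreover have "(2 * \<gamma>P - 1) * real s \<le> (2 * \<gamma>P - 1) * ((\<alpha> + 1 / F') * F)"
    proof -
      have "1 \<le> F / F'" using F' by simp
      hence "\<alpha> * F + 1 \<le> (\<alpha> + 1 / F') * F" by (simp add: algebra_simps)
      hence "real s \<le> (\<alpha> + 1 / F') * F" using s_lt by linarith
      thus ?thesis using \<gamma> by (intro mult_left_mono) auto
    qed
    ultimately show ?thesis unfolding Bg0_def gamma_hat_def by (simp add: algebra_simps)
  qed
  have F3pos: "fS 3 > 0" by (rule fS_pos) simp
  have F3le: "fS 3 \<le> F" unfolding F_def using n3 by (rule fS_mono)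
  have claim1: "measure_pmf.prob p {I. c I \<le> real n + real (min k (n - k)) + gamma_hat \<alpha> \<beta> \<gamma>P (fS n) * fS n}
           \<ge> 1 - 4 * real n powr (-2 * \<beta>)"
    using prob_ge gh[of F] Fpos unfolding F_def by simp
  have claim2: "measure_pmf.prob p {I. c I \<le> real n + real (min k (n - k)) + gamma_hat \<alpha> \<beta> \<gamma>P (fS 3) * fS n}
           \<ge> 1 - 4 * real n powr (-2 * \<beta>)"
    using prob_ge gh[OF F3pos F3le] unfolding F_def by simp
  have claim3: "measure_pmf.expectation p c
           \<le> real n + real (min k (n - k)) + (gamma_hat \<alpha> \<beta> \<gamma>P (fS n) + 4 * \<gamma>P + 2) * fS n"
    if \<beta>6: "\<beta> \<ge> 1/6"
  proof -
    have cb: "c I \<le> Bg0 + (\<gamma>P + 1) * real n * (if Good I then 0 else 1)" if I: "I \<in> \<Omega>" for I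
    proof (cases "Good I")
      case True thus ?thesis using det[OF I] unfolding Bg0_def by simp
    next
      case False
      have Isub: "I \<subseteq> {0..<n}" and cI: "card I = s" using I unfolding \<Omega>_eq by auto
      have idxu: "idx_u \<alpha> \<beta> (length X) k = iu" and idxv: "idx_v \<alpha> \<beta> (length X) k = iv"
        unfolding iu_def iv_def n_def by simp_all
      have "c I \<le> 2 * \<gamma>P * real s + 2 * real n - real s + \<gamma>P * real n"
        using det_all[OF cR _ _ _ idxu idxv iu1 ius iv1 ivs] \<gamma> Isub cI k1 kn
        unfolding c_def n_def by simp
      moreover have "0 \<le> (4 * \<gamma>P + 2) * Dg" using \<gamma> Dg_pos by simp
      ultimately show ?thesis using False unfolding Bg0_def by (simp add: algebra_simps)
    qed
    have "measure_pmf.expectation p c = sum c \<Omega> / C"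
      unfolding p_eq cardC[symmetric] by (rule integral_pmf_of_set[OF \<Omega>ne fin\<Omega>])
    also have "sum c \<Omega> \<le> (\<Sum>I\<in>\<Omega>. Bg0 + (\<gamma>P + 1) * real n * (if Good I then 0 else 1))"
      using cb by (rule sum_mono)
    also have "\<dots> = C * Bg0 + (\<gamma>P + 1) * real n * bd"
    proof -
      have "(\<Sum>I\<in>\<Omega>. (if Good I then 0 else 1::real)) = (\<Sum>I\<in>\<Omega>. (if \<not> Good I then 1 else 0))"
        by (intro sum.cong) auto
      also have "\<dots> = (\<Sum>I\<in>{I\<in>\<Omega>. \<not> Good I}. 1)" by (rule sum.inter_filter[OF fin\<Omega>, symmetric])
      also have "\<dots> = bd" unfolding bd_def by simp
      finally have ind: "(\<Sum>I\<in>\<Omega>. (if Good I then 0 else 1::real)) = bd" .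
      have "(\<Sum>I\<in>\<Omega>. Bg0 + (\<gamma>P + 1) * real n * (if Good I then 0 else 1))
          = (\<Sum>I\<in>\<Omega>. Bg0) + (\<Sum>I\<in>\<Omega>. (\<gamma>P + 1) * real n * (if Good I then 0 else 1))"
        by (rule sum.distrib)
      also have "(\<Sum>I\<in>\<Omega>. (\<gamma>P + 1) * real n * (if Good I then 0 else 1)) = (\<gamma>P + 1) * real n * (\<Sum>I\<in>\<Omega>. (if Good I then 0 else 1::real))"
        by (rule sum_distrib_left[symmetric])
      also have "(\<Sum>I\<in>\<Omega>. Bg0) = C * Bg0" using cardC by simp
      finally show ?thesis unfolding ind .
    qed
    finally have "measure_pmf.expectation p c \<le> (C * Bg0 + (\<gamma>P + 1) * real n * bd) / C"
      using C_pos' by (simp add: divide_right_mono)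
    also have "\<dots> = Bg0 + (\<gamma>P + 1) * real n * (bd / C)" using C_pos' by (simp add: field_simps)
    also have "(\<gamma>P + 1) * real n * (bd / C) \<le> (4 * \<gamma>P + 2) * fS n"
    proof (rule tail_num[OF n3 _ \<beta>6])
      show "2 \<le> \<gamma>P" using \<gamma> by simp
      show "0 \<le> bd / C" using C_pos' unfolding bd_def by simp
      show "bd / C \<le> 1" using bd_le C_pos' by simp
      show "bd / C \<le> 4 * real n powr (-2 * \<beta>)" by (rule bdC)
    qed
    also have "Bg0 \<le> real n + real (min k (n - k)) + gamma_hat \<alpha> \<beta> \<gamma>P (fS n) * fS n"
      using gh[of F] Fpos unfolding F_def by simp
    finally show ?thesis by (simp add: algebra_simps)
  qed
  show ?thesis using claim1 claim2 claim3 by blast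
qed

end
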